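(* Let $n$ and $k$ be integers with $n\ge 2$ and $2\le k\le 2^{n-1}+1$. Then $$v_2\big(s(2^n,2^n-k)\big)=\begin{cases} n-1-v_2(k) & \text{if } k \text{ is even},\\ 2n-2-v_2(k-1) & \text{if } k \text{ is odd}.\end{cases}$$
   Context: The (unsigned) Stirling numbers of the first kind $s(n,k)$ are defined by $x(x+1)\cdots(x+n-1)=\sum_{k=0}^n s(n,k)x^k$. $v_2$ denotes the $2$-adic valuation. *)

theory Defs
  imports "HOL-Combinatorics.Stirling" "HOL-Computational_Algebra.Primes"
begin

end

theory Submission
  imports Defs "HOL-Computational_Algebra.Polynomial"
begin

definition pcong :: "int \<Rightarrow> int poly \<Rightarrow> int poly \<Rightarrow> bool" where
  "pcong m p q \<longleftrightarrow> (\<exists>r. p = q + [:m:] * r)"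

lemma const_mult_poly: "[:a*b:] = [:a:] * ([:b:] :: int poly)"
  by simp

lemma pcong_refl: "pcong m p p"
  unfolding pcong_def by (rule exI[of _ 0]) simp

lemma pcong_trans: "pcong m p q \<Longrightarrow> pcong m q s \<Longrightarrow> pcong m p s"
  unfolding pcong_def by (metis add.assoc distrib_left)

lemma pcong_mult: assumes "pcong m p q" "pcong m p' q'" shows "pcong m (p*p') (q*q')"
proof -
  from assms obtain r r' where r: "p = q + [:m:] * r" "p' = q' + [:m:] * r'" unfolding pcong_def by blast
  have "p*p' = q*q' + [:m:] * (r*q' + q*r' + [:m:] * (r*r'))"
    unfolding r by (simp add: algebra_simps)
  thus ?thesis unfolding pcong_def by blast
qed

lemma pcong_dvd: assumes "m' dvd m" "pcong m p q" shows "pcong m' p q"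
proof -
  from assms obtain r c where r: "p = q + [:m:] * r" "m = m' * c" unfolding pcong_def by blast
  have "p = q + [:m':] * ([:c:] * r)" unfolding r const_mult_poly by (simp add: algebra_simps)
  thus ?thesis unfolding pcong_def by blast
qed

lemma pcong_prod: assumes "\<And>i. i \<in> A \<Longrightarrow> pcong m (f i) (g i)" shows "pcong m (prod f A) (prod g A)"
  using assms
proof (induction A rule: infinite_finite_induct)
  case (infinite A) then show ?case by (simp add: pcong_refl)
next
  case empty then show ?case by (simp add: pcong_refl)
next
  case (insert x F) then show ?case by (simp add: pcong_mult)
qed

lemma pcong_sq: assumes "2 dvd m" "pcong m p q" shows "pcong (2*m) (p*p) (q*q)"
proof -
  from assms obtain r c where r: "p = q + [:m:] * r" "m = 2 * c" unfolding pcong_def dvd_def by blast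
  have e1: "[:2*m:] = 4*[:c:]" "[:m:] = 2*[:c:]" unfolding r(2) by (simp_all add: numeral_poly)
  have "p*p = q*q + [:2*m:] * (q*r + [:c:] * (r*r))"
    unfolding r(1) e1 by algebra
  thus ?thesis unfolding pcong_def by blast
qed

lemma pcong_coeff: "pcong m p q \<Longrightarrow> m dvd coeff p i - coeff q i"
  unfolding pcong_def by auto


definition fq :: "nat \<Rightarrow> int poly" where "fq j = [:- (int j * int j), 0, 1:]"
definition Tp :: "nat \<Rightarrow> int poly" where "Tp a = (\<Prod>j\<in>{1..<2^(a+1)}. fq j)"
definition Zp :: "nat \<Rightarrow> int poly" where "Zp a = monom 1 (2*(2^a - 1)) * [:-1,0,1:]^(2^a)"

lemma Tp_0: "Tp 0 = Zp 0"
proof -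
  have "{1..<2::nat} = {1}" by auto
  then show ?thesis by (simp add: Tp_def Zp_def fq_def monom_0)
qed

lemma fq_rev:
  assumes "j < h" "h = 2^(a+1)"
  shows "fq (2*h - j) = fq j + [:(2^(a+2)):] * [:(-(2*(int h - int j))):]"
proof -
  have e: "int (2*h - j) = 2 * int h - int j" using assms by simp
  have hh: "int h = 2 * 2^a" using assms by simp
  have "fq (2*h - j) = [:-((2 * int h - int j)*(2 * int h - int j)), 0, 1:]"
    unfolding fq_def e ..
  then show ?thesis unfolding hh by (simp add: fq_def algebra_simps)
qed

lemma Tp_Suc: "pcong (2^(a+2)) (Tp (Suc a)) (Tp a * Tp a * fq (2^(a+1)))"
proof -
  define h :: nat where "h = 2^(a+1)"
  have hpos: "1 \<le> h" unfolding h_def by simp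
  have "Tp (Suc a) = (\<Prod>j\<in>{1..<2*h}. fq j)" unfolding Tp_def h_def by simp
  also have "\<dots> = (\<Prod>j\<in>{1..<h}. fq j) * (\<Prod>j\<in>{h..<2*h}. fq j)"
    using hpos by (simp add: prod.atLeastLessThan_concat)
  also have "(\<Prod>j\<in>{h..<2*h}. fq j) = fq h * (\<Prod>j\<in>{Suc h..<2*h}. fq j)"
    using hpos by (simp add: prod.atLeast_Suc_lessThan)
  also have "(\<Prod>j\<in>{Suc h..<2*h}. fq j) = (\<Prod>j\<in>{1..<h}. fq (2*h - j))"
    by (rule prod.reindex_bij_witness[where i="\<lambda>j. 2*h - j" and j="\<lambda>j. 2*h - j"]) auto
  finally have e: "Tp (Suc a) = Tp a * (fq h * (\<Prod>j\<in>{1..<h}. fq (2*h - j)))"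
    unfolding Tp_def h_def by simp
  have "pcong (2^(a+2)) (\<Prod>j\<in>{1..<h}. fq (2*h - j)) (\<Prod>j\<in>{1..<h}. fq j)"
  proof (rule pcong_prod)
    fix j assume "j \<in> {1..<h}"
    then have "fq (2*h - j) = fq j + [:(2^(a+2)):] * [:(-(2*(int h - int j))):]"
      using h_def by (intro fq_rev) auto
    then show "pcong (2^(a+2)) (fq (2*h - j)) (fq j)"
      unfolding pcong_def by blast
  qed
  then have "pcong (2^(a+2)) (Tp a * (fq h * (\<Prod>j\<in>{1..<h}. fq (2*h - j)))) (Tp a * (fq h * Tp a))"
    by (intro pcong_mult pcong_refl) (simp add: Tp_def h_def)
  then show ?thesis unfolding e h_def by (simp add: ac_simps)
qed

lemma fq_top: "pcong (2^(a+2)) (fq (2^(a+1))) [:0,0,1:]"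
proof -
  have "fq (2^(a+1)) = [:0,0,1:] + [:(2^(a+2)):] * [:(-(2^a)):]"
    by (simp add: fq_def power_mult_distrib flip: power_mult power_add)
  thus ?thesis unfolding pcong_def by blast
qed

lemma Zp_Suc: "Zp a * Zp a * [:0,0,1:] = Zp (Suc a)"
proof -
  have m: "[:0,0,1:] = (monom 1 2 :: int poly)" by (simp add: monom_altdef power2_eq_square)
  have d0: "2 * (x - 1) + 2 * (x - 1) + 2 = 2 * (2 * x - 1)" if "1 \<le> x" for x :: nat
    using that by arith
  have d: "2 * (2 ^ a - 1) + 2 * (2 ^ a - 1) + 2 = 2 * (2 ^ Suc a - 1::nat)"
    using d0[of "2^a"] by simp
  have d': "Suc (Suc (4 * (2 ^ a - Suc 0))) = 2 * (2 * 2 ^ a - Suc 0)"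
    using d0[of "2^a"] by simp
  show ?thesis unfolding Zp_def m
    by (simp add: mult_monom d d' ac_simps flip: power_add mult_2)
qed

lemma T_cong: "pcong (2^(a+1)) (Tp a) (Zp a)"
proof (induction a)
  case 0 then show ?case by (simp add: Tp_0 pcong_refl)
next
  case (Suc a)
  have "pcong (2*2^(a+1)) (Tp a * Tp a) (Zp a * Zp a)"
    by (rule pcong_sq) (use Suc in auto)
  then have A: "pcong (2^(a+2)) (Tp a * Tp a) (Zp a * Zp a)" by simp
  have "pcong (2^(a+2)) (Tp a * Tp a * fq (2^(a+1))) (Zp a * Zp a * [:0,0,1:])"
    by (rule pcong_mult[OF A fq_top])
  then have X: "pcong (2^(a+2)) (Tp (Suc a)) (Zp a * Zp a * [:0,0,1:])"
    using pcong_trans[OF Tp_Suc] by blast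
  show ?case using X[unfolded Zp_Suc] by simp
qed


definition Pp :: "nat \<Rightarrow> int poly" where "Pp N = (\<Prod>i<N. [:int i, 1:])"

lemma coeff_lin_mult: "coeff (p * [:c,1:]) (Suc k) = c * coeff p (Suc k) + coeff p k"
  "coeff (p * [:c,1:]) 0 = c * coeff p 0" for p :: "int poly"
proof -
  have e: "p * [:c,1:] = smult c p + pCons 0 p" by (simp add: mult.commute[of p] one_pCons[symmetric] smult_1_left)
  show "coeff (p * [:c,1:]) (Suc k) = c * coeff p (Suc k) + coeff p k" unfolding e by simp
  show "coeff (p * [:c,1:]) 0 = c * coeff p 0" unfolding e by simp
qed

lemma coeff_Pp: "coeff (Pp N) k = int (stirling N k)"
proof (induction N arbitrary: k)
  case 0 then show ?case by (cases k) (simp_all add: Pp_def)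
next
  case (Suc N)
  have e: "Pp (Suc N) = Pp N * [:int N, 1:]" by (simp add: Pp_def)
  show ?case
  proof (cases k)
    case 0 then show ?thesis unfolding e coeff_lin_mult using Suc by (cases N) simp_all
  next
    case (Suc k') then show ?thesis unfolding e coeff_lin_mult using Suc.IH by simp
  qed
qed

lemma taylor: "\<exists>r. pcompose p [:c,1:] = p + [:c:] * pderiv p + [:c*c:] * r" for p :: "int poly"
proof (induction p rule: pCons_induct)
  case 0 then show ?case by (intro exI[of _ 0]) simp
next
  case (pCons a p)
  then obtain r where r: "pcompose p [:c,1:] = p + [:c:] * pderiv p + [:c*c:] * r" by blast
  define X :: "int poly" where "X = [:0,1:]"
  have q: "[:c,1:] = [:c:] + X" by (simp add: X_def)
  have pc: "pCons a p = [:a:] + X * p" "pCons 0 (pderiv p) = X * pderiv p" by (simp_all add: X_def)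
  have cc: "[:c*c:] = [:c:] * [:c:]" by simp
  have "pcompose (pCons a p) [:c,1:] = [:a:] + [:c,1:] * pcompose p [:c,1:]" by (simp add: pcompose_pCons)
  also have "\<dots> = pCons a p + [:c:] * pderiv (pCons a p) + [:c*c:] * (pderiv p + [:c:]*r + X*r)"
    unfolding r unfolding pderiv_pCons unfolding pc q cc by algebra
  finally show ?case by blast
qed

definition Rp :: "nat \<Rightarrow> int poly" where
  "Rp a = [:0, -(2^(a+1)), 1:] * Tp a"

lemma pcomp_fq: "pcompose (fq j) [:int h,1:] = [:int h - int j, 1:] * [:int h + int j, 1:]"
  by (simp add: fq_def pcompose_pCons algebra_simps)

lemma P_eq: "Pp (2^(a+2)) = pcompose (Rp a) [:2^(a+1),1:]"
proof -
  define h :: nat where "h = 2^(a+1)"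
  have hpos: "1 \<le> h" unfolding h_def by simp
  have N: "2^(a+2) = 2*h" unfolding h_def by simp
  let ?g = "\<lambda>i::nat. [:int i, 1:]"
  have "Pp (2*h) = (\<Prod>i\<in>{0..<2*h}. ?g i)" unfolding Pp_def atLeast0LessThan ..
  also have "\<dots> = (\<Prod>i\<in>{0..<1}. ?g i) * (\<Prod>i\<in>{1..<2*h}. ?g i)"
    by (rule prod.atLeastLessThan_concat[symmetric]) (use hpos in auto)
  also have "(\<Prod>i\<in>{1..<2*h}. ?g i) = (\<Prod>i\<in>{1..<h}. ?g i) * (\<Prod>i\<in>{h..<2*h}. ?g i)"
    by (rule prod.atLeastLessThan_concat[symmetric]) (use hpos in auto)
  also have "(\<Prod>i\<in>{h..<2*h}. ?g i) = ?g h * (\<Prod>i\<in>{Suc h..<2*h}. ?g i)"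
    using hpos by (simp add: prod.atLeast_Suc_lessThan)
  also have "(\<Prod>i\<in>{Suc h..<2*h}. ?g i) = (\<Prod>j\<in>{1..<h}. [:int h + int j, 1:])"
    by (rule prod.reindex_bij_witness[where i="\<lambda>j. h + j" and j="\<lambda>i. i - h"]) auto
  also have "(\<Prod>i\<in>{1..<h}. ?g i) = (\<Prod>j\<in>{1..<h}. [:int h - int j, 1:])"
    by (rule prod.reindex_bij_witness[where i="\<lambda>j. h - j" and j="\<lambda>i. h - i"]) (auto simp: of_nat_diff)
  finally have e1: "Pp (2*h) = [:0,1:] * ((\<Prod>j\<in>{1..<h}. [:int h - int j, 1:]) * ([:int h,1:] * (\<Prod>j\<in>{1..<h}. [:int h + int j, 1:])))"
    by simp
  have e0: "pcompose [:0, -(2^(a+1)), 1:] [:int h,1:] = [:0,1:]*[:int h,1:]"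
    by (simp add: pcompose_pCons h_def algebra_simps)
  have e2: "pcompose (Rp a) [:int h,1:] = [:0,1:] * [:int h, 1:] * (\<Prod>j\<in>{1..<h}. [:int h - int j, 1:] * [:int h + int j, 1:])"
    unfolding Rp_def Tp_def h_def[symmetric] pcompose_mult pcompose_prod pcomp_fq e0 ..
  have "Pp (2^(a+2)) = [:0,1:] * ((\<Prod>j\<in>{1..<h}. [:int h - int j, 1:]) * ([:int h,1:] * (\<Prod>j\<in>{1..<h}. [:int h + int j, 1:])))"
    unfolding N e1 ..
  also have "\<dots> = pcompose (Rp a) [:int h,1:]"
    unfolding e2 prod.distrib by (simp only: ac_simps)
  finally have "Pp (2^(a+2)) = pcompose (Rp a) [:int h,1:]" .
  then show ?thesis by (simp add: h_def)
qed


definition evenp :: "int poly \<Rightarrow> bool" where "evenp p \<longleftrightarrow> (\<forall>i. odd i \<longrightarrow> coeff p i = 0)"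

lemma evenp_mult: assumes "evenp p" "evenp q" shows "evenp (p*q)"
  unfolding evenp_def
proof (intro allI impI)
  fix n :: nat assume n: "odd n"
  have "coeff (p*q) n = (\<Sum>i\<le>n. coeff p i * coeff q (n-i))" by (rule coeff_mult)
  also have "\<dots> = 0"
  proof (rule sum.neutral, intro ballI)
    fix i assume i: "i \<in> {..n}"
    show "coeff p i * coeff q (n - i) = 0"
    proof (cases "odd i")
      case True then show ?thesis using assms(1) unfolding evenp_def by simp
    next
      case False then have "odd (n - i)" using n i by auto
      then show ?thesis using assms(2) unfolding evenp_def by simp
    qed
  qed
  finally show "coeff (p*q) n = 0" .
qed

lemma evenp_prod: "(\<And>i. i \<in> A \<Longrightarrow> evenp (f i)) \<Longrightarrow> evenp (prod f A)"
proof (induction A rule: infinite_finite_induct)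
  case (infinite A) then show ?case using odd_pos by (auto simp: evenp_def)
next
  case empty then show ?case using odd_pos by (auto simp: evenp_def)
next
  case (insert x F) then show ?case by (simp add: evenp_mult)
qed

lemma evenp_fq: "evenp (fq j)"
  unfolding evenp_def fq_def
proof (intro allI impI)
  fix i :: nat assume "odd i"
  then show "coeff [:- (int j * int j), 0, 1:] i = 0"
    by (cases i; cases "i - 1"; cases "i - 2") (auto simp: coeff_pCons')
qed

lemma Tp_odd: "odd i \<Longrightarrow> coeff (Tp a) i = 0"
  using evenp_prod[of "{1..<2^(a+1)}" fq] evenp_fq unfolding Tp_def evenp_def by blast

lemma coeff_Rp: "coeff (Rp a) (Suc i) = -(2^(a+1)) * coeff (Tp a) i + (case i of 0 \<Rightarrow> 0 | Suc i' \<Rightarrow> coeff (Tp a) i')"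
  unfolding Rp_def by (cases i) simp_all

lemma coeffP:
  "\<exists>c. coeff (Pp (2^(a+2))) (2*t+2) = coeff (Tp a) (2*t) + 2^(a+1)*2^(a+1)*c"
  "\<exists>c. coeff (Pp (2^(a+2))) (2*t+1) = 2^(a+1)*(2*int t+1)*coeff (Tp a) (2*t) + 2^(a+1)*2^(a+1)*c"
proof -
  define h :: int where "h = 2^(a+1)"
  obtain r where r: "pcompose (Rp a) [:h,1:] = Rp a + [:h:] * pderiv (Rp a) + [:h*h:] * r"
    using taylor by blast
  have P: "Pp (2^(a+2)) = Rp a + [:h:] * pderiv (Rp a) + [:h*h:] * r"
    using P_eq[of a] r h_def by simp
  have cP: "coeff (Pp (2^(a+2))) i = coeff (Rp a) i + h * (of_nat (Suc i) * coeff (Rp a) (Suc i)) + h*h*coeff r i" for i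
    unfolding P by (simp add: coeff_pderiv)
  have o1: "coeff (Tp a) (2*t+1) = 0" by (rule Tp_odd) simp
  have R2: "coeff (Rp a) (2*t+2) = coeff (Tp a) (2*t)"
    using coeff_Rp[of a "2*t+1"] o1 h_def by simp
  have R3: "coeff (Rp a) (2*t+3) = -h * coeff (Tp a) (2*t+2)"
    using coeff_Rp[of a "2*t+2"] o1 h_def by (simp add: numeral_3_eq_3)
  have R1: "coeff (Rp a) (2*t+1) = -h * coeff (Tp a) (2*t)"
  proof (cases t)
    case 0 then show ?thesis using coeff_Rp[of a 0] h_def by simp
  next
    case (Suc t')
    have "coeff (Rp a) (Suc (Suc (2*t'+1))) = -h*coeff (Tp a) (Suc (2*t'+1))"
      using coeff_Rp[of a "Suc (2*t'+1)"] Tp_odd[of "2*t'+1" a] h_def by simp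
    then show ?thesis using Suc by simp
  qed
  have "coeff (Pp (2^(a+2))) (2*t+2) = coeff (Tp a) (2*t) + h*h*(coeff r (2*t+2) - (2*int t+3) * coeff (Tp a) (2*t+2))"
    using cP[of "2*t+2"] R2 R3 by (simp add: algebra_simps numeral_3_eq_3)
  then show "\<exists>c. coeff (Pp (2^(a+2))) (2*t+2) = coeff (Tp a) (2*t) + 2^(a+1)*2^(a+1)*c"
    unfolding h_def by blast
  have "coeff (Pp (2^(a+2))) (2*t+1) = h*(2*int t+1)*coeff (Tp a) (2*t) + h*h*coeff r (2*t+1)"
    using cP[of "2*t+1"] R2 R1 by (simp add: algebra_simps)
  then show "\<exists>c. coeff (Pp (2^(a+2))) (2*t+1) = 2^(a+1)*(2*int t+1)*coeff (Tp a) (2*t) + 2^(a+1)*2^(a+1)*c"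
    unfolding h_def by blast
qed


lemma coeff_W:
  assumes "i \<le> M"
  shows "coeff ([:-1,0,1:]^M) (2*i) = (-1)^(M-i) * int (M choose i)"
proof -
  have w: "[:-1,0,1:] = (monom 1 2 + monom (-1) 0 :: int poly)"
    by (simp add: monom_altdef power2_eq_square monom_0)
  have t: "of_nat (M choose k) * monom 1 2 ^ k * monom (-1) 0 ^ (M - k) =
           (monom (int (M choose k) * (-1)^(M-k)) (2*k) :: int poly)" for k
    by (simp add: monom_power mult_monom of_nat_poly ac_simps flip: monom_0)
  have "coeff ([:-1,0,1:]^M) (2*i) = (\<Sum>k\<le>M. coeff (monom (int (M choose k) * (-1)^(M-k)) (2*k)) (2*i))"
    unfolding w binomial_ring coeff_sum t atLeast0AtMost ..
  also have "\<dots> = (\<Sum>k\<le>M. if k = i then int (M choose k) * (-1)^(M-k) else 0)"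
    by (rule sum.cong) auto
  also have "\<dots> = (-1)^(M-i) * int (M choose i)" using assms by simp
  finally show ?thesis .
qed

lemma coeff_Zp:
  assumes "1 \<le> m" "m \<le> 2^a"
  shows "coeff (Zp a) (2*(2*2^a - m - 1)) = (-1)^m * int (2^a choose m)"
proof -
  define M :: nat where "M = 2^a"
  have idx: "2*(2*M - m - 1) = 2*(M - 1) + 2*(M - m)" using assms M_def by simp
  have "coeff (Zp a) (2*(2*2^a - m - 1)) = coeff ([:-1,0,1:]^M) (2*(M-m))"
    unfolding Zp_def coeff_monom_mult M_def[symmetric] idx by simp
  also have "\<dots> = (-1)^(M-(M-m)) * int (M choose (M-m))" by (rule coeff_W) simp
  also have "\<dots> = (-1)^m * int (M choose m)"
    using assms M_def by (simp add: binomial_symmetric[symmetric])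
  finally show ?thesis unfolding M_def .
qed

lemma even_choose: assumes "0 < r" "r < 2^a" shows "even ((2::nat)^a choose r)"
proof (rule ccontr)
  assume o: "odd ((2::nat)^a choose r)"
  have "r * (2^a choose r) = 2^a * ((2^a - 1) choose (r - 1))"
    by (rule times_binomial_minus1_eq[OF assms(1)])
  then have "(2::nat)^a dvd r * (2^a choose r)" by simp
  moreover have "coprime ((2::nat)^a) (2^a choose r)" using o by simp
  ultimately have "(2::nat)^a dvd r" by (simp add: coprime_dvd_mult_left_iff)
  then show False using assms by (auto dest: dvd_imp_le)
qed

lemma odd_choose: "r < 2^a \<Longrightarrow> odd ((2::nat)^a - 1 choose r)"
proof (induction r)
  case 0 then show ?case by simp
next
  case (Suc r)
  obtain N' where s: "(2::nat)^a = Suc N'" using not0_implies_Suc[of "(2::nat)^a"] by auto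
  have "(2::nat)^a choose Suc r = (2^a - 1 choose r) + (2^a - 1 choose Suc r)"
    by (simp add: s)
  moreover have "even ((2::nat)^a choose Suc r)" using Suc.prems by (intro even_choose) auto
  ultimately show ?case using Suc by auto
qed

lemma v2_choose:
  assumes "1 \<le> m" "m \<le> 2^a"
  shows "multiplicity (2::nat) m \<le> a \<and> (\<exists>c. ((2::nat)^a choose m) = 2^(a - multiplicity 2 m) * c \<and> odd c)"
proof -
  define v where "v = multiplicity (2::nat) m"
  have m0: "m \<noteq> 0" using assms by simp
  have nu: "\<not> is_unit (2::nat)" by simp
  obtain q where q0: "m = 2^multiplicity 2 m * q" "\<not> 2 dvd q" by (rule multiplicity_decompose'[OF m0 nu])
  have q: "m = 2^v * q" using q0 v_def by simp
  have "q \<noteq> 0" using q m0 by auto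
  then have "2^v \<le> m" unfolding q by simp
  then have "(2::nat)^v \<le> 2^a" using assms by linarith
  then have va: "v \<le> a" by simp
  define C where "C = (2::nat)^a choose m"
  define D where "D = (2::nat)^a - 1 choose (m - 1)"
  have Dodd: "odd D" unfolding D_def using assms by (intro odd_choose) auto
  have Cnz: "C \<noteq> 0" unfolding C_def using assms by simp
  have eq: "m * C = 2^a * D" unfolding C_def D_def using assms by (intro times_binomial_minus1_eq) auto
  have pr: "prime_elem (2::nat)" by simp
  have "multiplicity (2::nat) (m * C) = v + multiplicity 2 C"
    using prime_elem_multiplicity_mult_distrib[OF pr, of m C] assms Cnz v_def by simp
  moreover have "multiplicity (2::nat) (2^a * D) = a"
  proof -
    have D0: "D \<noteq> 0" using odd_pos[OF Dodd] by simp
    have "multiplicity 2 D = 0" using multiplicity_eq_zero_iff[OF D0 nu] Dodd by simp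
    note D0 this
    then show ?thesis using prime_elem_multiplicity_mult_distrib[OF pr, of "2^a" D] by simp
  qed
  ultimately have w: "multiplicity (2::nat) C = a - v" using eq by simp
  obtain c where c: "C = 2^multiplicity 2 C * c" "\<not> 2 dvd c" by (rule multiplicity_decompose'[OF Cnz nu])
  show ?thesis using va c w unfolding C_def v_def by auto
qed

lemma mult_from: assumes "int s = 2^e * u" "odd u" shows "multiplicity (2::nat) s = e"
proof -
  have "u \<noteq> 0" using assms(2) by auto
  moreover have "0 \<le> (2::int)^e * u" unfolding assms(1)[symmetric] by simp
  ultimately have u0: "0 < u" by (simp add: zero_le_mult_iff)
  have "int (2^e * nat u) = 2^e * u" using u0 by simp
  then have "int s = int (2^e * nat u)" using assms(1) by simp
  then have se: "s = 2^e * nat u" by (simp only: of_nat_eq_iff)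
  have "\<not> 2 dvd nat u" using assms(2) u0 by (simp add: even_nat_iff)
  then show ?thesis unfolding se by (intro multiplicity_decomposeI) auto
qed


lemma idx_even: "m \<le> x \<Longrightarrow> 1 \<le> m \<Longrightarrow> 4*x - 2*m = 2*(2*x - m - 1) + (2::nat)" by arith
lemma idx_odd: "m \<le> x \<Longrightarrow> 1 \<le> m \<Longrightarrow> 4*x - (2*m+1) = 2*(2*x - m - 1) + (1::nat)" by arith

theorem corollary1p3:
  fixes n k :: nat
  assumes "n \<ge> 2" and "2 \<le> k" and "k \<le> 2 ^ (n - 1) + 1"
  shows "multiplicity (2::nat) (stirling (2 ^ n) (2 ^ n - k)) =
           (if even k then n - 1 - multiplicity (2::nat) k
            else 2 * n - 2 - multiplicity (2::nat) (k - 1))"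
proof -
  define a where "a = n - 2"
  have na: "n = a + 2" using assms(1) a_def by simp
  have kle: "k \<le> 2 * 2^a + 1" using assms(3) unfolding na by simp
  have sc: "int (stirling (2^n) (2^n - k)) = coeff (Pp (2^(a+2))) (2^(a+2) - k)"
    unfolding na coeff_Pp ..
  have Tc: "(2::int)^(a+1) dvd coeff (Tp a) i - coeff (Zp a) i" for i
    by (rule pcong_coeff[OF T_cong])
  have M1: "(1::nat) \<le> 2^a" by simp
  show ?thesis
  proof (cases "even k")
    case True
    then obtain m where km: "k = 2*m" by blast
    have m1: "1 \<le> m" and mM: "m \<le> 2^a" using km assms(2) kle by auto
    define t where "t = 2*2^a - m - 1"
    have idx: "2^(a+2) - k = 2*t + 2" unfolding t_def km using idx_even[OF mM m1] by simp
    obtain c where c: "coeff (Pp (2^(a+2))) (2*t+2) = coeff (Tp a) (2*t) + 2^(a+1)*2^(a+1)*c"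
      using coeffP(1) by blast
    obtain d where d: "coeff (Tp a) (2*t) = coeff (Zp a) (2*t) + 2^(a+1) * d"
      using Tc[of "2*t"] by (metis add.commute diff_add_cancel dvdE)
    have z: "coeff (Zp a) (2*t) = (-1)^m * int (2^a choose m)"
      unfolding t_def by (rule coeff_Zp[OF m1 mM])
    define v where "v = multiplicity (2::nat) m"
    obtain c' where va: "v \<le> a" and c': "(2::nat)^a choose m = 2^(a - v) * c'" "odd c'"
      using v2_choose[OF m1 mM] unfolding v_def by blast
    have hsplit: "(2::int)^(a+1) = 2^(a-v) * 2^(v+1)"
      using va by (simp flip: power_add)
    have "int (stirling (2^n) (2^n - k)) = 2^(a-v) * ((-1)^m * int c' + 2^(v+1) * (d + 2^(a+1)*c))"
      unfolding sc idx c d z c'(1) hsplit by (simp add: algebra_simps)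
    moreover have "odd ((-1)^m * int c' + 2^(v+1) * (d + 2^(a+1)*c))"
      using c'(2) by simp
    ultimately have L: "multiplicity (2::nat) (stirling (2^n) (2^n - k)) = a - v"
      by (rule mult_from)
    have "multiplicity (2::nat) k = Suc v" unfolding km v_def by (rule multiplicity_times_same) (use m1 in auto)
    then show ?thesis using True L na by simp
  next
    case False
    then obtain m where km: "k = 2*m+1" using oddE by blast
    have m1: "1 \<le> m" and mM: "m \<le> 2^a" using km assms(2) kle by auto
    define t where "t = 2*2^a - m - 1"
    have idx: "2^(a+2) - k = 2*t + 1" unfolding t_def km using idx_odd[OF mM m1] by simp
    obtain c where c: "coeff (Pp (2^(a+2))) (2*t+1) = 2^(a+1)*(2*int t+1)*coeff (Tp a) (2*t) + 2^(a+1)*2^(a+1)*c"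
      using coeffP(2) by blast
    obtain d where d: "coeff (Tp a) (2*t) = coeff (Zp a) (2*t) + 2^(a+1) * d"
      using Tc[of "2*t"] by (metis add.commute diff_add_cancel dvdE)
    have z: "coeff (Zp a) (2*t) = (-1)^m * int (2^a choose m)"
      unfolding t_def by (rule coeff_Zp[OF m1 mM])
    define v where "v = multiplicity (2::nat) m"
    obtain c' where va: "v \<le> a" and c': "(2::nat)^a choose m = 2^(a - v) * c'" "odd c'"
      using v2_choose[OF m1 mM] unfolding v_def by blast
    have hsplit: "(2::int)^(a+1) = 2^(a-v) * 2^(v+1)"
      using va by (simp flip: power_add)
    have e: "(2::int)^(a+1+(a-v)) = 2^(a+1) * 2^(a-v)" by (simp add: power_add)
    have hv: "(2::int)^v * 2^(a-v) = 2^a" using va by (simp flip: power_add)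
    have "int (stirling (2^n) (2^n - k)) = 2^(a+1+(a-v)) * ((2*int t+1)*(-1)^m * int c' + 2^(v+1) * ((2*int t+1)*d + c))"
      unfolding sc idx c d z c'(1) e
      by (simp add: algebra_simps) (simp add: hsplit algebra_simps hv)
    moreover have "odd ((2*int t+1)*(-1)^m * int c' + 2^(v+1) * ((2*int t+1)*d + c))"
      using c'(2) by simp
    ultimately have L: "multiplicity (2::nat) (stirling (2^n) (2^n - k)) = a+1+(a-v)"
      by (rule mult_from)
    have "multiplicity (2::nat) (k-1) = Suc v" 
    proof -
      have "k - 1 = 2*m" by (simp add: km)
      then show ?thesis unfolding v_def by (simp only:) (rule multiplicity_times_same, use m1 in auto)
    qed
    then show ?thesis using False L na va by simp
  qed
qed

end
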